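(* Let $M$ be an enveloping matroid for a delta-matroid $D$ on $[n,\overline{n}]$, and let $S\in\operatorname{AdS}_n$. Then $S$ is independent in $M$ if and only if $S$ is independent in $D$.
   Context: Let $[n,\overline{n}]=\{1,\dots,n,\overline{1},\dots,\overline{n}\}$ with involution $a\mapsto\overline{a}$; $\overline{S}=\{\overline{a}:a\in S\}$. A subset is admissible if it contains at most one of $i,\overline{i}$ for each $i$; $\operatorname{AdS}_n$ is the set of admissible subsets. In $\mathbb{R}^n$ set $e_{\overline{i}}=-e_i$, $e_S=\sum_{a\in S}e_a$. A delta-matroid $D$ on $[n,\overline{n}]$ is a nonempty collection $\mathcal{F}$ of admissible sets of size $n$ (feasible sets) such that $P(D)=\operatorname{Conv}\{e_B:B\in\mathcal{F}\}$ has all edges parallel to some $e_i$ or $e_i\pm e_j$. An admissible $S$ is independent in $D$ if it is contained in a feasible set (equivalently $\max_{B\in\mathcal{F}}(|S\cap B|-|\overline{S}\cap B|)=|S|$). For $S\subseteq[n,\overline{n}]$ let $u_S\in\mathbb{R}^{[n,\overline{n}]}$ be its indicator vector; for a matroid $M$ on the $2n$-element ground set $[n,\overline{n}]$ let $P(M)=\operatorname{Conv}\{u_B:B\text{ a basis of }M\}$. Let $\operatorname{env}\colon\mathbb{R}^{[n,\overline{n}]}\to\mathbb{R}^n$, $(x_1,\dots,x_n,x_{\overline{1}},\dots,x_{\overline{n}})\mapsto(x_1-x_{\overline{1}},\dots,x_n-x_{\overline{n}})$. $M$ is an enveloping matroid for $D$ if $\operatorname{env}(P(M))=P(D)$. 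*)

theory Defs
  imports "HOL-Analysis.Analysis"
begin

text \<open>Ground set [n, nbar] is modelled as the type 'n \<times> bool with n = CARD('n):
  (i, True) stands for i and (i, False) stands for its barred copy.\<close>

definition bar :: "'n \<times> bool \<Rightarrow> 'n \<times> bool" where
  "bar a = (fst a, \<not> snd a)"

definition admissible :: "('n \<times> bool) set \<Rightarrow> bool" where
  "admissible S \<longleftrightarrow> (\<forall>a\<in>S. bar a \<notin> S)"

definition AdS :: "('n::finite \<times> bool) set set" where
  "AdS = {S. admissible S}"

definition evec :: "'n::finite \<times> bool \<Rightarrow> real ^ 'n" where
  "evec a = (if snd a then axis (fst a) 1 else - axis (fst a) 1)"

definition eS :: "('n::finite \<times> bool) set \<Rightarrow> real ^ 'n" where
  "eS S = (\<Sum>a\<in>S. evec a)"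

definition PD :: "('n::finite \<times> bool) set set \<Rightarrow> (real ^ 'n) set" where
  "PD F = convex hull (eS ` F)"

definition edge_dirs :: "(real ^ 'n::finite) set" where
  "edge_dirs = {axis i 1 | i. True}
     \<union> {axis i 1 + axis j 1 | i j. i \<noteq> j} \<union> {axis i 1 - axis j 1 | i j. i \<noteq> j}"

definition parallel_to :: "(real ^ 'n::finite) set \<Rightarrow> real ^ 'n \<Rightarrow> bool" where
  "parallel_to E v \<longleftrightarrow> (\<forall>x\<in>E. \<forall>y\<in>E. \<exists>c. x - y = c *\<^sub>R v)"

definition delta_matroid :: "('n::finite \<times> bool) set set \<Rightarrow> bool" where
  "delta_matroid F \<longleftrightarrow> F \<noteq> {} \<and>
     (\<forall>B\<in>F. admissible B \<and> card B = CARD('n)) \<and>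
     (\<forall>E. E face_of PD F \<and> aff_dim E = 1 \<longrightarrow> (\<exists>v\<in>edge_dirs. parallel_to E v))"

definition indep_D :: "('n::finite \<times> bool) set set \<Rightarrow> ('n \<times> bool) set \<Rightarrow> bool" where
  "indep_D F S \<longleftrightarrow> admissible S \<and> (\<exists>B\<in>F. S \<subseteq> B)"

definition matroid_bases :: "('a::finite) set set \<Rightarrow> bool" where
  "matroid_bases Bs \<longleftrightarrow> Bs \<noteq> {} \<and>
     (\<forall>B1\<in>Bs. \<forall>B2\<in>Bs. \<forall>x\<in>B1 - B2. \<exists>y\<in>B2 - B1. insert y (B1 - {x}) \<in> Bs)"

definition indep_M :: "('a::finite) set set \<Rightarrow> 'a set \<Rightarrow> bool" where
  "indep_M Bs S \<longleftrightarrow> (\<exists>B\<in>Bs. S \<subseteq> B)"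

definition uS :: "('a::finite) set \<Rightarrow> real ^ 'a" where
  "uS S = (\<chi> a. if a \<in> S then 1 else 0)"

definition PM :: "('a::finite) set set \<Rightarrow> (real ^ 'a) set" where
  "PM Bs = convex hull (uS ` Bs)"

definition env :: "real ^ ('n::finite \<times> bool) \<Rightarrow> real ^ 'n" where
  "env x = (\<chi> i. x $ (i, True) - x $ (i, False))"

definition enveloping :: "('n::finite \<times> bool) set set \<Rightarrow> ('n \<times> bool) set set \<Rightarrow> bool" where
  "enveloping Bs F \<longleftrightarrow> env ` PM Bs = PD F"

end

theory Submission imports Defs begin

lemma eS_comp: "eS X $ i = (if (i,True) \<in> X then 1 else 0) - (if (i,False) \<in> X then (1::real) else 0)"
proof -
  have "eS X $ i = (\<Sum>b\<in>X. evec b $ i)" unfolding eS_def by (simp add: sum_component)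
  also have "\<dots> = (\<Sum>b\<in>X \<inter> {(i,True),(i,False)}. evec b $ i)"
    by (rule sum.mono_neutral_right) (auto simp: evec_def axis_def)
  also have "\<dots> = (if (i,True) \<in> X then 1 else 0) - (if (i,False) \<in> X then (1::real) else 0)"
    by (cases "(i,True) \<in> X"; cases "(i,False) \<in> X") (auto simp: evec_def axis_def Int_insert_right)
  finally show ?thesis .
qed

lemma evec_inner: "evec a \<bullet> x = (if snd a then x $ fst a else - (x $ fst a))"
  by (simp add: evec_def inner_axis')

definition wt :: "('n::finite \<times> bool) set \<Rightarrow> ('n \<times> bool) set \<Rightarrow> real" where
  "wt S X = (\<Sum>a\<in>S. (if a \<in> X then 1 else 0) - (if bar a \<in> X then 1 else 0))"

lemma eS_inner: "eS S \<bullet> eS X = wt S X"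
  unfolding wt_def
  apply (subst eS_def, simp add: inner_sum_left)
  apply (rule sum.cong, simp)
  subgoal for a by (cases a; cases "snd a") (auto simp: evec_inner eS_comp bar_def)
  done

lemma env_uS: "env (uS X) = eS X"
  by (simp add: vec_eq_iff env_def uS_def eS_comp)

lemma linear_env: "linear env"
  by (rule linearI) (simp_all add: vec_eq_iff env_def algebra_simps)

lemma PD_eq: "enveloping Bs F \<Longrightarrow> convex hull (eS ` Bs) = PD F"
  unfolding enveloping_def PM_def
  by (simp add: convex_hull_linear_image[OF linear_env] image_image env_uS)

lemma augment:
  assumes M: "matroid_bases Bs" and "B0 \<in> Bs" "S \<subseteq> B0" "B \<in> Bs"
  shows "\<exists>B''\<in>Bs. S \<subseteq> B'' \<and> B'' \<subseteq> S \<union> B"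
proof -
  let ?P = "\<lambda>X. X \<in> Bs \<and> S \<subseteq> X"
  obtain X where X: "?P X" and Xmin: "\<And>Y. ?P Y \<Longrightarrow> card (X - (S \<union> B)) \<le> card (Y - (S \<union> B))"
    using ex_has_least_nat[of ?P B0 "\<lambda>X. card (X - (S \<union> B))"] assms by blast
  have "X \<subseteq> S \<union> B"
  proof (rule ccontr)
    assume "\<not> X \<subseteq> S \<union> B"
    then obtain x where x: "x \<in> X" "x \<notin> S" "x \<notin> B" by blast
    then obtain y where y: "y \<in> B - X" "insert y (X - {x}) \<in> Bs"
      using M X \<open>B \<in> Bs\<close> unfolding matroid_bases_def by blast
    let ?Y = "insert y (X - {x})"
    have "?P ?Y" using y X x by auto
    have "?Y - (S \<union> B) = (X - (S \<union> B)) - {x}" using y by auto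
    moreover have "card ((X - (S \<union> B)) - {x}) < card (X - (S \<union> B))"
      by (rule card_Diff1_less) (use x in auto)
    ultimately have "card (?Y - (S \<union> B)) < card (X - (S \<union> B))" by simp
    with Xmin[OF \<open>?P ?Y\<close>] show False by simp
  qed
  with X show ?thesis by blast
qed

lemma full_adm:
  fixes B :: "('n::finite \<times> bool) set"
  assumes "admissible B" "card B = CARD('n)"
  shows "(i,True) \<in> B \<or> (i,False) \<in> B"
proof -
  have "inj_on fst B"
  proof (rule inj_onI)
    fix x y assume "x \<in> B" "y \<in> B" "fst x = fst y"
    show "x = y"
    proof (rule ccontr)
      assume "x \<noteq> y"
      with \<open>fst x = fst y\<close> have "y = bar x" unfolding bar_def
        by (cases x; cases y) auto
      thus False using assms(1) \<open>x \<in> B\<close> \<open>y \<in> B\<close> unfolding admissible_def by blast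
    qed
  qed
  hence "card (fst ` B) = CARD('n)" using assms(2) by (simp add: card_image)
  hence "fst ` B = UNIV" by (simp add: card_subset_eq)
  hence "i \<in> fst ` B" by simp
  then obtain b where "(i,b) \<in> B" by force
  thus ?thesis by (cases b) auto
qed

lemma wt_le: "wt S X \<le> card S"
proof -
  have "wt S X \<le> (\<Sum>a\<in>S. 1)" unfolding wt_def by (rule sum_mono) auto
  thus ?thesis by simp
qed

lemma wt_eq: assumes "wt S X = card S" shows "S \<subseteq> X"
proof (rule ccontr)
  assume "\<not> S \<subseteq> X"
  then obtain a where a: "a \<in> S" "a \<notin> X" by blast
  have fin: "finite S" using a by (metis finite)
  have "wt S X < (\<Sum>a\<in>S. 1)" unfolding wt_def
    by (rule sum_strict_mono_ex1[OF fin]) (use a in auto)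
  thus False using assms by simp
qed

lemma wt_full: assumes "admissible X" "S \<subseteq> X" shows "wt S X = card S"
proof -
  have "wt S X = (\<Sum>a\<in>S. 1)" unfolding wt_def
    by (rule sum.cong) (use assms in \<open>auto simp: admissible_def\<close>)
  thus ?thesis by simp
qed


theorem proposition3p12:
  fixes F :: "('n::finite \<times> bool) set set" and Bs :: "('n \<times> bool) set set"
    and S :: "('n \<times> bool) set"
  assumes "delta_matroid F"
    and "matroid_bases Bs"
    and "enveloping Bs F"
    and "S \<in> AdS"
  shows "indep_M Bs S \<longleftrightarrow> indep_D F S"
proof -
  have admS: "admissible S" using assms(4) by (simp add: AdS_def)
  have Fprop: "\<And>B. B \<in> F \<Longrightarrow> admissible B \<and> card B = CARD('n)"
    using assms(1) by (simp add: delta_matroid_def)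
  have Bsne: "Bs \<noteq> {}" using assms(2) by (simp add: matroid_bases_def)
  have finBs: "finite Bs" by simp
  define P where "P = convex hull (eS ` Bs)"
  have P1: "P = convex hull (eS ` F)" using PD_eq[OF assms(3)] by (simp add: P_def PD_def)
  define m where "m = Max (wt S ` Bs)"
  have m_in: "m \<in> wt S ` Bs" unfolding m_def using Bsne by simp
  have m_ge: "\<And>B. B \<in> Bs \<Longrightarrow> wt S B \<le> m" unfolding m_def by simp
  have Pbound: "\<And>x. x \<in> P \<Longrightarrow> eS S \<bullet> x \<le> m"
  proof -
    have "P \<subseteq> {x. eS S \<bullet> x \<le> m}" unfolding P_def
      by (rule hull_minimal) (auto simp: eS_inner m_ge convex_halfspace_le)
    thus "\<And>x. x \<in> P \<Longrightarrow> eS S \<bullet> x \<le> m" by blast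
  qed
  show ?thesis
  proof
    assume "indep_M Bs S"
    then obtain B0 where B0: "B0 \<in> Bs" "S \<subseteq> B0" by (auto simp: indep_M_def)
    define G where "G = P \<inter> {x. eS S \<bullet> x = m}"
    have convP: "convex P" unfolding P_def by simp
    have compP: "compact P" unfolding P_def by (simp add: compact_convex_hull finite_imp_compact)
    have faceG: "G face_of P" unfolding G_def
      by (rule face_of_Int_supporting_hyperplane_le[OF convP Pbound])
    have compG: "compact G" using face_of_imp_compact[OF convP compP faceG] .
    have convG: "convex G" using faceG by (simp add: face_of_imp_convex)
    obtain Bm where Bm: "Bm \<in> Bs" "wt S Bm = m" using m_in by auto
    have "eS Bm \<in> G" unfolding G_def P_def using Bm by (auto simp: hull_inc eS_inner)
    hence "G \<noteq> {}" by blast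
    then obtain v where v: "v extreme_point_of G"
      using extreme_point_exists_convex[OF compG convG] by blast
    hence vP: "v extreme_point_of P" and vG: "v \<in> G"
      using extreme_point_of_face[OF faceG] by auto
    obtain B where B: "B \<in> Bs" "v = eS B"
      using extreme_point_of_convex_hull[of v "eS ` Bs"] vP unfolding P_def by auto
    obtain B' where B': "B' \<in> F" "v = eS B'"
      using extreme_point_of_convex_hull[of v "eS ` F"] vP unfolding P1 by auto
    have wB: "wt S B = m" using vG B by (simp add: G_def eS_inner)
    obtain B'' where B'': "B'' \<in> Bs" "S \<subseteq> B''" "B'' \<subseteq> S \<union> B"
      using augment[OF assms(2) B0 B(1)] by blast
    have SB: "S \<subseteq> B"
    proof (rule ccontr)
      assume "\<not> S \<subseteq> B"
      then obtain a where a: "a \<in> S" "a \<notin> B" by blast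
      have barB: "\<And>a. a \<in> S \<Longrightarrow> bar a \<in> B'' \<Longrightarrow> bar a \<in> B"
        using B''(3) admS unfolding admissible_def by blast
      have "wt S B < wt S B''" unfolding wt_def
      proof (rule sum_strict_mono_ex1)
        show "finite S" by simp
        show "\<forall>x\<in>S. (if x \<in> B then 1 else 0) - (if bar x \<in> B then 1 else 0)
             \<le> (if x \<in> B'' then 1 else 0) - (if bar x \<in> B'' then (1::real) else 0)"
          using barB B''(2) by auto
        show "\<exists>x\<in>S. (if x \<in> B then 1 else 0) - (if bar x \<in> B then 1 else 0)
             < (if x \<in> B'' then 1 else 0) - (if bar x \<in> B'' then (1::real) else 0)"
          using barB B''(2) a by (intro bexI[of _ a]) auto
      qed
      thus False using m_ge[OF B''(1)] wB by simp
    qed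
    have "S \<subseteq> B'"
    proof
      fix a assume aS: "a \<in> S"
      obtain i b where ab: "a = (i,b)" by (cases a)
      have "eS B $ i = eS B' $ i" using B B' by simp
      hence "(if (i,True) \<in> B then 1 else 0) - (if (i,False) \<in> B then 1 else 0)
           = (if (i,True) \<in> B' then 1 else 0) - (if (i,False) \<in> B' then (1::real) else 0)"
        by (simp add: eS_comp)
      moreover have "(i,True) \<in> B' \<or> (i,False) \<in> B'" using full_adm Fprop[OF B'(1)] by blast
      moreover have "\<not> ((i,True) \<in> B' \<and> (i,False) \<in> B')"
        using Fprop[OF B'(1)] unfolding admissible_def bar_def by force
      moreover have "(i,b) \<in> B" using aS SB ab by auto
      ultimately show "a \<in> B'" unfolding ab by (cases b; auto split: if_splits)
    qed
    thus "indep_D F S" using B'(1) admS by (auto simp: indep_D_def)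
  next
    assume "indep_D F S"
    then obtain B' where B': "B' \<in> F" "S \<subseteq> B'" by (auto simp: indep_D_def)
    have "eS B' \<in> P" unfolding P1 using B' by (simp add: hull_inc)
    hence "wt S B' \<le> m" using Pbound[of "eS B'"] by (simp add: eS_inner)
    moreover have "wt S B' = card S" using wt_full Fprop[OF B'(1)] B'(2) by blast
    moreover obtain B where B: "B \<in> Bs" "wt S B = m" using m_in by auto
    ultimately have "wt S B = card S" using wt_le[of S B] by simp
    hence "S \<subseteq> B" by (rule wt_eq)
    thus "indep_M Bs S" using B by (auto simp: indep_M_def)
  qed
qed

end
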